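(* For real $z\ge 10$ let $$c_2(z)=\sum_{\substack{n_1,n_2,n_3,n_4\le z\\ \sqrt{n_1}+\sqrt{n_2}=\sqrt{n_3}+\sqrt{n_4}}}\frac{d(n_1)d(n_2)d(n_3)d(n_4)\,(\sqrt{n_1}+\sqrt{n_2}+\sqrt{n_3}+\sqrt{n_4})}{(n_1n_2n_3n_4)^{3/4}},$$ the sum being over positive integers. Then $c_2(z)\ll\log^4 z$ uniformly for $z\ge 10$.
   Context: $d(n)$ denotes the number of positive divisors of $n$. $f\ll g$ means $|f|\le Cg$ for some absolute positive constant $C$. *)

theory Defs
  imports "HOL-Analysis.Analysis"
begin

definition divisor_count :: "nat \<Rightarrow> nat" where
  "divisor_count n = card {d. d dvd n}"

definition c2 :: "real \<Rightarrow> real" where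
  "c2 z = (\<Sum>(n1, n2, n3, n4) \<in> {(n1, n2, n3, n4).
              n1 \<in> {1..nat \<lfloor>z\<rfloor>} \<and> n2 \<in> {1..nat \<lfloor>z\<rfloor>} \<and>
              n3 \<in> {1..nat \<lfloor>z\<rfloor>} \<and> n4 \<in> {1..nat \<lfloor>z\<rfloor>} \<and>
              sqrt (real n1) + sqrt (real n2) = sqrt (real n3) + sqrt (real n4)}.
     real (divisor_count n1 * divisor_count n2 * divisor_count n3 * divisor_count n4)
       * (sqrt (real n1) + sqrt (real n2) + sqrt (real n3) + sqrt (real n4))
       / (real (n1 * n2 * n3 * n4)) powr (3/4))"

end

theory Submission
  imports Defs "HOL-Computational_Algebra.Squarefree" "HOL-Computational_Algebra.Nth_Powers"
begin


lemma dc_mult_coprime: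
  fixes a b :: nat
  assumes "coprime a b" "a > 0" "b > 0"
  shows "divisor_count (a*b) = divisor_count a * divisor_count b"
proof -
  have fa: "finite {x. x dvd a}" using assms by simp
  have fb: "finite {x. x dvd b}" using assms by simp
  have eq: "{x. x dvd a*b} = (\<lambda>(x,y). x*y) ` ({x. x dvd a} \<times> {y. y dvd b})"
  proof
    show "{x. x dvd a*b} \<subseteq> (\<lambda>(x,y). x*y) ` ({x. x dvd a} \<times> {y. y dvd b})"
    proof
      fix e assume "e \<in> {x. x dvd a*b}"
      then obtain x y where "e = x*y" "x dvd a" "y dvd b" using division_decomp by blast
      thus "e \<in> (\<lambda>(x,y). x*y) ` ({x. x dvd a} \<times> {y. y dvd b})" by force
    qed
  qed (auto intro: mult_dvd_mono)
  have inj: "inj_on (\<lambda>(x,y). x*y) ({x. x dvd a} \<times> {y. y dvd b})"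
  proof (rule inj_onI, clarify)
    fix x y x' y' :: nat
    assume h: "x dvd a" "y dvd b" "x' dvd a" "y' dvd b" "x*y = x'*y'"
    have c1: "coprime x y'" using assms(1) h coprime_imp_coprime
      by (meson coprime_divisors)
    have c2: "coprime x' y" using assms(1) h by (meson coprime_divisors)
    have "x dvd x' * y'" using h(5) by (metis dvd_triv_left)
    hence "x dvd x'" using c1 by (simp add: coprime_dvd_mult_left_iff)
    moreover have "x' dvd x * y" using h(5) by (metis dvd_triv_left)
    hence "x' dvd x" using c2 by (simp add: coprime_dvd_mult_left_iff)
    ultimately have "x = x'" by (simp add: dvd_antisym)
    moreover have "x > 0" using h(1) assms by (auto intro!: Nat.gr0I)
    ultimately show "x = x' \<and> y = y'" using h(5) by simp
  qed
  show ?thesis unfolding divisor_count_def eq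
    by (simp add: card_image[OF inj] card_cartesian_product)
qed

lemma dc_primepow:
  fixes p :: nat assumes "prime p"
  shows "divisor_count (p^k) = k + 1"
proof -
  have "{x. x dvd p^k} = (\<lambda>i. p^i) ` {0..k}"
    using divides_primepow_nat[OF assms] by auto
  moreover have "inj_on (\<lambda>i. p^i) {0..k}"
    using assms prime_gt_1_nat by (auto intro!: inj_onI simp: power_inject_exp)
  ultimately show ?thesis unfolding divisor_count_def by (simp add: card_image)
qed



definition c8 :: nat where "c8 = 8^8"
lemma c8_ge: "c8 \<ge> 1" by (simp add: c8_def)

lemma kp1_le: "(k+1::nat) \<le> 8 * 2^(k div 8)"
proof -
  have "k div 8 < 2^(k div 8)" by (rule less_exp)
  hence "k div 8 + 1 \<le> 2^(k div 8)" by (simp add: Suc_leI)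
  moreover have "k + 1 \<le> 8 * (k div 8 + 1)" by simp
  ultimately show ?thesis by linarith
qed

lemma kp1_pow8_small: "(k+1::nat)^8 \<le> c8 * 2^k"
proof -
  have "(k+1)^8 \<le> (8 * 2^(k div 8))^8" by (rule power_mono[OF kp1_le]) simp
  also have "\<dots> = 8^8 * (2^(k div 8))^8" by (simp only: power_mult_distrib)
  also have "\<dots> = c8 * 2^(8*(k div 8))" by (simp only: c8_def power_mult[symmetric] mult.commute)
  also have "\<dots> \<le> c8 * 2^k" by (intro mult_left_mono power_increasing) auto
  finally show ?thesis .
qed

lemma kp1_pow8_large: assumes "(256::nat) \<le> p" shows "(k+1::nat)^8 \<le> p^k"
proof -
  have "k < 2^k" by (rule less_exp)
  hence "(k+1)^8 \<le> (2^k)^8" by (intro power_mono) (auto simp: Suc_leI)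
  also have "\<dots> = (2^8::nat)^k" by (simp only: power_mult[symmetric] mult.commute)
  also have "\<dots> = (256::nat)^k" by simp
  also have "\<dots> \<le> p^k" by (intro power_mono assms) simp
  finally show ?thesis .
qed

definition smallp :: "nat \<Rightarrow> nat set" where
  "smallp n = {p. prime p \<and> p < 256 \<and> p dvd n}"

lemma smallp_sub: "smallp n \<subseteq> {..<256}" by (auto simp: smallp_def)
lemma smallp_fin: "finite (smallp n)" using finite_subset[OF smallp_sub] by simp
lemma smallp_card: "card (smallp n) \<le> 256"
  using card_mono[OF _ smallp_sub] by simp

lemma dc_pow8_aux: "n > 0 \<Longrightarrow> divisor_count n ^ 8 \<le> (c8::nat) ^ card (smallp n) * n"
proof (induction n rule: less_induct)
  case (less n)
  show ?case
  proof (cases "n = 1")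
    case True
    have "{x. x dvd (1::nat)} = {1}" by auto
    hence "divisor_count 1 = 1" by (simp add: divisor_count_def)
    thus ?thesis using True one_le_power[OF c8_ge] by simp
  next
    case False
    then obtain p where p: "prime p" "p dvd n" using prime_factor_nat by blast
    define k where "k = multiplicity p n"
    define m where "m = n div p^k"
    have pk: "p^k dvd n" unfolding k_def by (rule multiplicity_dvd)
    have n_eq: "n = p^k * m" using pk unfolding m_def by simp
    have kpos: "k > 0" unfolding k_def using p less.prems
      by (simp add: prime_multiplicity_gt_zero_iff)
    have mpos: "m > 0" using n_eq less.prems by (auto intro!: Nat.gr0I)
    have npm: "\<not> p dvd m"
    proof
      assume "p dvd m"
      hence "p^Suc k dvd n" using n_eq by (simp add: mult_dvd_mono)
      hence "multiplicity p n \<ge> Suc k" using p less.prems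
        by (intro multiplicity_geI) auto
      thus False unfolding k_def by simp
    qed
    have cop: "coprime (p^k) m" using npm p
      by (simp add: prime_imp_coprime_nat coprime_power_left_iff)
    have p2: "p \<ge> 2" using p prime_ge_2_nat by blast
    have "p^1 \<le> p^k" by (rule power_increasing) (use kpos p2 in auto)
    hence pk2: "p^k \<ge> 2" using p2 by simp
    have "1 * m < p^k * m" using pk2 mpos by (intro mult_strict_right_mono) auto
    hence mlt: "m < n" using n_eq by simp
    have IH: "divisor_count m ^ 8 \<le> (c8::nat) ^ card (smallp m) * m"
      using less.IH[OF mlt mpos] .
    have dcn: "divisor_count n = (k+1) * divisor_count m"
    proof -
      have "0 < p^k" using p2 by simp
      thus ?thesis using n_eq dc_mult_coprime[OF cop _ mpos] dc_primepow[OF p(1), of k] by simp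
    qed
    have sp: "smallp n = smallp m \<union> (if p < 256 then {p} else {})"
    proof -
      have "q dvd n \<longleftrightarrow> q = p \<or> q dvd m" if "prime q" for q
      proof -
        have "q dvd n \<longleftrightarrow> q dvd p^k \<or> q dvd m" using n_eq that
          by (simp add: prime_dvd_mult_iff)
        also have "q dvd p^k \<longleftrightarrow> q dvd p" using that kpos by (simp add: prime_dvd_power_iff)
        also have "q dvd p \<longleftrightarrow> q = p" using that p primes_dvd_imp_eq by auto
        finally show ?thesis .
      qed
      thus ?thesis unfolding smallp_def using p by auto
    qed
    have pnot: "p \<notin> smallp m" using npm by (simp add: smallp_def)
    show ?thesis
    proof (cases "p < 256")
      case True
      have cs: "card (smallp n) = card (smallp m) + 1"
        using sp True pnot smallp_fin by simp
      have "divisor_count n ^ 8 = (k+1)^8 * divisor_count m ^ 8" by (simp only: dcn power_mult_distrib)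
      also have "\<dots> \<le> (c8 * 2^k) * ((c8::nat) ^ card (smallp m) * m)"
        by (intro mult_mono kp1_pow8_small IH) auto
      also have "\<dots> \<le> (c8 * p^k) * ((c8::nat) ^ card (smallp m) * m)"
        by (intro mult_mono power_mono p2) auto
      also have "\<dots> = (c8::nat) ^ card (smallp n) * n" unfolding cs by (simp add: n_eq mult_ac)
      finally show ?thesis .
    next
      case False
      have cs: "card (smallp n) = card (smallp m)" using sp False by simp
      have "divisor_count n ^ 8 = (k+1)^8 * divisor_count m ^ 8" by (simp only: dcn power_mult_distrib)
      also have "\<dots> \<le> p^k * ((c8::nat) ^ card (smallp m) * m)"
        by (intro mult_mono kp1_pow8_large IH) (use False in auto)
      also have "\<dots> = (c8::nat) ^ card (smallp n) * n" unfolding cs by (simp add: n_eq mult_ac)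
      finally show ?thesis .
    qed
  qed
qed

definition KD :: nat where "KD = (c8::nat)^256"

lemma dc_pow8: "n > 0 \<Longrightarrow> divisor_count n ^ 8 \<le> KD * n"
proof -
  assume n: "n > 0"
  have "(c8::nat) ^ card (smallp n) \<le> KD" unfolding KD_def
    by (intro power_increasing smallp_card c8_ge)
  thus ?thesis using dc_pow8_aux[OF n] by (meson le_trans mult_le_mono1)
qed

definition MD :: real where "MD = real KD powr (1/8)"

lemma KD_pos: "KD > 0" unfolding KD_def using c8_ge by (intro zero_less_power) simp

lemma MD_pos: "MD > 0" unfolding MD_def using KD_pos by simp

lemma dc_pos: "n > 0 \<Longrightarrow> divisor_count n > 0"
proof -
  assume n: "n > 0"
  have "finite {x. x dvd n}" using n by simp
  moreover have "1 \<in> {x. x dvd n}" by simp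
  ultimately show ?thesis unfolding divisor_count_def by (metis card_gt_0_iff empty_iff)
qed

lemma dc_bound: "n > 0 \<Longrightarrow> real (divisor_count n) \<le> MD * real n powr (1/8)"
proof -
  assume n: "n > 0"
  define x where "x = real (divisor_count n)"
  have xpos: "x > 0" unfolding x_def using dc_pos[OF n] by simp
  have e8: "x ^ 8 = x powr 8" using powr_realpow[OF xpos, of 8] by simp
  have "x = (x ^ 8) powr (1/8)" unfolding e8 powr_powr using xpos by simp
  also have "x ^ 8 = real (divisor_count n ^ 8)" unfolding x_def by simp
  also have "real (divisor_count n ^ 8) \<le> real (KD * n)" using dc_pow8[OF n] by (simp only: of_nat_le_iff)
  hence "real (divisor_count n ^ 8) powr (1/8) \<le> real (KD * n) powr (1/8)"
    by (intro powr_mono2) auto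
  also have "real (KD * n) powr (1/8) = MD * real n powr (1/8)" unfolding MD_def by (simp add: powr_mult)
  finally show ?thesis unfolding x_def .
qed



lemma sq_of_mult_sq:
  fixes N b a :: nat
  assumes "b > 0" "N * b^2 = a^2"
  shows "\<exists>t. N = t^2"
proof (cases "N = 0")
  case True thus ?thesis by simp
next
  case False
  hence a0: "a \<noteq> 0" using assms by (metis mult_is_0 power_not_zero zero_power2 not_gr0)
  have "is_nth_power 2 N" unfolding is_nth_power_conv_multiplicity_nat[OF zero_less_numeral]
  proof (intro allI impI)
    fix p :: nat assume p: "prime p"
    have "multiplicity p (N * b^2) = multiplicity p N + 2 * multiplicity p b"
      using p False assms(1) by (simp add: prime_elem_multiplicity_mult_distrib prime_elem_multiplicity_power_distrib)
    moreover have "multiplicity p (a^2) = 2 * multiplicity p a"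
      using p a0 by (simp add: prime_elem_multiplicity_power_distrib)
    ultimately have "multiplicity p N + 2 * multiplicity p b = 2 * multiplicity p a" using assms(2) by simp
    thus "2 dvd multiplicity p N" by presburger
  qed
  thus ?thesis by (auto elim: is_nth_powerE)
qed

lemma sf_eq:
  fixes x y t :: nat
  assumes "x > 0" "y > 0" "x * y = t^2"
  shows "squarefree_part x = squarefree_part y"
proof -
  have t0: "t \<noteq> 0" using assms by (metis mult_is_0 zero_power2 not_gr0)
  have "normalize (squarefree_part x) = normalize (squarefree_part y)"
  proof (rule multiplicity_eq_imp_eq)
    fix p :: nat assume p: "prime p"
    have "multiplicity p x + multiplicity p y = 2 * multiplicity p t"
      using p assms t0 prime_elem_multiplicity_mult_distrib[of p x y] prime_elem_multiplicity_power_distrib[of p t 2]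
      by simp
    hence "multiplicity p x mod 2 = multiplicity p y mod 2" by presburger
    thus "multiplicity p (squarefree_part x) = multiplicity p (squarefree_part y)"
      using p by (simp add: prime_multiplicity_squarefree_part)
  qed auto
  thus ?thesis by simp
qed

lemma sf_idem: "squarefree_part (squarefree_part (x::nat)) = squarefree_part x"
proof -
  have "normalize (squarefree_part (squarefree_part x)) = normalize (squarefree_part x)"
    by (rule multiplicity_eq_imp_eq) (auto simp: prime_multiplicity_squarefree_part)
  thus ?thesis by simp
qed

lemma sf_pos: "squarefree_part (x::nat) > 0" using squarefree_part_nonzero[of x] by (simp del: squarefree_part_nonzero)

lemma sq_pos: "x > 0 \<Longrightarrow> square_part (x::nat) > 0" using square_part_0_iff[of x] by (simp del: square_part_0_iff)

lemma decomp: "(x::nat) = squarefree_part x * square_part x ^ 2" by (rule squarefree_decompose)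

lemma sqrt_decomp: "sqrt (real (x::nat)) = sqrt (real (squarefree_part x)) * real (square_part x)"
proof -
  have "real x = real (squarefree_part x) * real (square_part x) ^ 2"
    by (subst decomp) simp
  thus ?thesis by (simp add: real_sqrt_mult)
qed



lemma sqrt_eq_nat: "sqrt (real (m::nat)) = sqrt (real n) \<Longrightarrow> m = n" by simp

lemma square_from_int:
  fixes N :: nat and R Q :: int
  assumes "R \<noteq> 0" "int N * R^2 = Q^2"
  shows "\<exists>t. N = t^2"
proof -
  have "int (N * (nat \<bar>R\<bar>)^2) = int ((nat \<bar>Q\<bar>)^2)"
    using assms(2) by (simp add: power2_eq_square abs_mult[symmetric])
  hence "N * (nat \<bar>R\<bar>)^2 = (nat \<bar>Q\<bar>)^2" by (simp only: of_nat_eq_iff)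
  thus ?thesis using assms(1) by (intro sq_of_mult_sq[of "nat \<bar>R\<bar>"]) auto
qed

lemma char:
  fixes n1 n2 n3 n4 :: nat
  assumes pos: "n1 > 0" "n2 > 0" "n3 > 0" "n4 > 0"
  and eq: "sqrt (real n1) + sqrt (real n2) = sqrt (real n3) + sqrt (real n4)"
  shows "(n1 = n3 \<and> n2 = n4) \<or> (n1 = n4 \<and> n2 = n3) \<or>
    (\<exists>q a b c. 0 < q \<and> q \<le> n1 \<and> 0 < a \<and> a \<le> n1 \<and> 0 < b \<and> b \<le> n2 \<and> 0 < c \<and> c \<le> n3 \<and>
       c < a + b \<and> n1 = q*a^2 \<and> n2 = q*b^2 \<and> n3 = q*c^2 \<and> n4 = q*(a+b-c)^2)"
proof -
  define x1 where "x1 = sqrt (real n1)"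
  define x2 where "x2 = sqrt (real n2)"
  define x3 where "x3 = sqrt (real n3)"
  define x4 where "x4 = sqrt (real n4)"
  have s1: "x1^2 = real n1" "x2^2 = real n2" "x3^2 = real n3" "x4^2 = real n4"
    by (simp_all add: x1_def x2_def x3_def x4_def)
  have e: "x1 + x2 = x3 + x4" using eq by (simp add: x1_def x2_def x3_def x4_def)
  define R :: int where "R = int n3 + int n4 - int n1 - int n2"
  have "(x1+x2)^2 = (x3+x4)^2" using e by simp
  hence E1: "2*(x1*x2) = real_of_int R + 2*(x3*x4)"
    unfolding R_def power2_eq_square using s1 by (simp add: power2_eq_square algebra_simps)
  show ?thesis
  proof (cases "R = 0")
    case True
    hence m: "x1*x2 = x3*x4" using E1 by simp
    have "(x1 - x3)*(x1 - x4) = x1*x1 - x1*(x3+x4) + x3*x4" by (simp add: algebra_simps)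
    also have "\<dots> = x1*x1 - x1*(x1+x2) + x1*x2" using e m by simp
    also have "\<dots> = 0" by (simp add: algebra_simps)
    finally have "x1 = x3 \<or> x1 = x4" by simp
    thus ?thesis
    proof
      assume h: "x1 = x3"
      hence "x2 = x4" using e by simp
      thus ?thesis using h by (simp add: x1_def x2_def x3_def x4_def)
    next
      assume h: "x1 = x4"
      hence "x2 = x3" using e by simp
      thus ?thesis using h by (simp add: x1_def x2_def x3_def x4_def)
    qed
  next
    case False
    have p12: "(x1*x2)^2 = real (n1*n2)" using s1 by (simp add: power_mult_distrib)
    have p34: "(x3*x4)^2 = real (n3*n4)" using s1 by (simp add: power_mult_distrib)
    have "(2*(x1*x2))^2 = (real_of_int R + 2*(x3*x4))^2" using E1 by simp
    hence "4 * real (n1*n2) = (real_of_int R)^2 + 4 * real_of_int R * (x3*x4) + 4 * real (n3*n4)"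
      using p12 p34 by (simp add: power2_eq_square algebra_simps)
    hence "real_of_int (4*R) * (x3*x4) = real_of_int (4 * int (n1*n2) - 4 * int (n3*n4) - R^2)"
      by simp
    hence "(real_of_int (4*R))^2 * (x3*x4)^2 = (real_of_int (4 * int (n1*n2) - 4 * int (n3*n4) - R^2))^2"
      by (metis power_mult_distrib)
    hence "real_of_int (int (n3*n4) * (4*R)^2) = real_of_int ((4 * int (n1*n2) - 4 * int (n3*n4) - R^2)^2)"
      using p34 by (simp add: mult.commute)
    hence I1: "int (n3*n4) * (4*R)^2 = (4 * int (n1*n2) - 4 * int (n3*n4) - R^2)^2"
      by (simp only: of_int_eq_iff)
    have "4*R \<noteq> 0" using False by simp
    from square_from_int[OF this I1] obtain B where B: "n3*n4 = B^2" by blast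
    have "x3*x4 = real B" using p34 B
      by (metis of_nat_0_le_iff of_nat_power real_sqrt_abs abs_of_nonneg real_sqrt_unique
          x3_def x4_def real_sqrt_ge_zero mult_nonneg_nonneg)
    hence "(2*(x1*x2))^2 = (real_of_int R + 2 * real B)^2" using E1 by simp
    hence "real_of_int (int (n1*n2) * 2^2) = real_of_int ((R + 2 * int B)^2)"
      using p12 by (simp add: power_mult_distrib mult.commute)
    hence I2: "int (n1*n2) * 2^2 = (R + 2 * int B)^2" by (simp only: of_int_eq_iff)
    have "(2::int) \<noteq> 0" by simp
    from square_from_int[OF this I2] obtain A where A: "n1*n2 = A^2" by blast
    define q where "q = squarefree_part n1"
    define q' where "q' = squarefree_part n3"
    define a where "a = square_part n1"
    define b where "b = square_part n2"
    define c where "c = square_part n3"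
    define d where "d = square_part n4"
    have q2: "squarefree_part n2 = q" unfolding q_def using sf_eq[OF pos(1,2) A] by simp
    have q4: "squarefree_part n4 = q'" unfolding q'_def using sf_eq[OF pos(3,4) B] by simp
    have n1e: "n1 = q*a^2" unfolding q_def a_def by (rule decomp)
    have n2e: "n2 = q*b^2" unfolding q2[symmetric] b_def by (rule decomp)
    have n3e: "n3 = q'*c^2" unfolding q'_def c_def by (rule decomp)
    have n4e: "n4 = q'*d^2" unfolding q4[symmetric] d_def by (rule decomp)
    have ap: "a > 0" "b > 0" "c > 0" "d > 0" unfolding a_def b_def c_def d_def using pos sq_pos by auto
    have qp: "q > 0" "q' > 0" unfolding q_def q'_def using sf_pos by auto
    have "sqrt (real q) * real (a + b) = sqrt (real q') * real (c + d)"
      using eq sqrt_decomp[of n1] sqrt_decomp[of n2] sqrt_decomp[of n3] sqrt_decomp[of n4] q2 q4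
      unfolding q_def q'_def a_def b_def c_def d_def by (simp add: algebra_simps)
    hence "(sqrt (real q) * real (a + b))^2 = (sqrt (real q') * real (c + d))^2" by simp
    hence "real (q * (a+b)^2) = real (q' * (c+d)^2)" by (simp add: power_mult_distrib)
    hence qq: "q * (a+b)^2 = q' * (c+d)^2" by (simp only: of_nat_eq_iff)
    hence "(q*q') * (a+b)^2 = (q'*(c+d))^2" by (simp add: power2_eq_square mult_ac)
    then obtain t where "q*q' = t^2" using sq_of_mult_sq[of "a+b"] ap by auto
    hence "squarefree_part q = squarefree_part q'" using sf_eq qp by blast
    hence qeq: "q = q'" unfolding q_def q'_def by (simp add: sf_idem)
    hence "(a+b)^2 = (c+d)^2" using qq qp by simp
    hence abcd: "a + b = c + d" by (simp add: power2_eq_square) (metis power2_eq_square power2_eq_iff_nonneg zero_le)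
    have "a \<le> a^2" "b \<le> b^2" "c \<le> c^2" using ap by (simp_all add: power2_eq_square)
    hence "a \<le> n1" "b \<le> n2" "c \<le> n3" "q \<le> n1" using n1e n2e n3e qp ap qeq
      by (auto intro: order_trans simp: power2_eq_square)
    moreover have "d = a + b - c" using abcd by simp
    ultimately show ?thesis using ap qp n1e n2e n3e n4e qeq abcd
      by (intro disjI2 exI[of _ q] exI[of _ a] exI[of _ b] exI[of _ c]) auto
  qed
qed



lemma psum_bound:
  fixes s :: real assumes "s > 1"
  shows "\<exists>P. \<forall>N. (\<Sum>k\<in>{1..N}. real k powr (-s)) \<le> P"
proof -
  have sm: "summable (\<lambda>n. real n powr (-s))" using assms by (subst summable_real_powr_iff) simp
  show ?thesis
    by (rule exI[of _ "suminf (\<lambda>n. real n powr (-s))"], intro allI sum_le_suminf[OF sm]) auto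
qed

lemma harm_bound: "N \<ge> 1 \<Longrightarrow> (\<Sum>k\<in>{1..N}. 1 / real k) \<le> 1 + ln (real N)"
proof (induction N rule: dec_induct)
  case base thus ?case by simp
next
  case (step n)
  have n: "real n \<ge> 1" using step by simp
  have "ln (real n / real (Suc n)) \<le> real n / real (Suc n) - 1"
    using n by (intro ln_le_minus_one) auto
  also have "\<dots> = - (1 / real (Suc n))" by (simp add: field_simps)
  finally have "1 / real (Suc n) \<le> ln (real (Suc n)) - ln (real n)"
    using n by (simp add: ln_div)
  moreover have "(\<Sum>k\<in>{1..Suc n}. 1 / real k) = (\<Sum>k\<in>{1..n}. 1 / real k) + 1 / real (Suc n)"
    by simp
  ultimately show ?case using step.IH by linarith
qed

lemma dvd_div_le: "0 < (n::nat) \<Longrightarrow> x dvd n \<Longrightarrow> x \<le> n" by (simp add: dvd_imp_le)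

definition gmap :: "nat \<times> nat \<times> nat \<Rightarrow> nat \<times> nat \<times> nat \<times> nat" where
  "gmap = (\<lambda>(n,x,u). (gcd x u, x div gcd x u, u div gcd x u, (n div x) div (u div gcd x u)))"

lemma gmap_props:
  fixes n x u :: nat
  assumes n: "n > 0" and x: "x dvd n" and u: "u dvd n"
  defines "al \<equiv> gcd x u" and "be \<equiv> x div gcd x u" and "ga \<equiv> u div gcd x u"
      and "de \<equiv> (n div x) div (u div gcd x u)"
  shows "al > 0" "be > 0" "ga > 0" "de > 0" "al*be*ga*de = n" "x = al*be" "u = al*ga"
proof -
  have x0: "x > 0" using x n by (auto intro!: Nat.gr0I)
  have u0: "u > 0" using u n by (auto intro!: Nat.gr0I)
  show a0: "al > 0" unfolding al_def using x0 by simp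
  show xe: "x = al*be" unfolding al_def be_def by simp
  show ue: "u = al*ga" unfolding al_def ga_def by simp
  show "be > 0" using xe x0 by (auto intro!: Nat.gr0I)
  show g0: "ga > 0" using ue u0 by (auto intro!: Nat.gr0I)
  define y where "y = n div x"
  have ny: "n = x * y" unfolding y_def using x by simp
  have cop: "coprime be ga" unfolding be_def ga_def using x0 by (intro div_gcd_coprime) simp
  have "al * ga dvd al * (be * y)" using u ue xe ny by (simp add: mult.assoc)
  hence "ga dvd be * y" using a0 by simp
  hence gy: "ga dvd y" using cop by (metis coprime_commute coprime_dvd_mult_right_iff coprime_dvd_mult_left_iff)
  have ye: "y = ga * de" unfolding de_def ga_def y_def[symmetric] using gy[unfolded ga_def] by simp
  show "de > 0" using ye ny n by (auto intro!: Nat.gr0I)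
  show "al*be*ga*de = n" using ny xe ye by (simp add: mult.assoc)
qed

lemma sum4:
  fixes f g h k :: "nat \<Rightarrow> real"
  shows "(\<Sum>(a,b,c,d)\<in>A \<times> B \<times> C \<times> D. f a * g b * h c * k d) = sum f A * sum g B * sum h C * sum k D"
proof -
  have "(\<Sum>(a,b,c,d)\<in>A \<times> B \<times> C \<times> D. f a * g b * h c * k d)
      = (\<Sum>a\<in>A. \<Sum>b\<in>B. \<Sum>c\<in>C. \<Sum>d\<in>D. f a * g b * h c * k d)"
    by (simp add: sum.cartesian_product)
  also have "\<dots> = sum f A * sum g B * sum h C * sum k D"
    by (simp only: sum_distrib_left[symmetric] sum_distrib_right[symmetric])
  finally show ?thesis .
qed

lemma d2_sum:
  "(\<Sum>n\<in>{1..N}. real (divisor_count n)^2 / real n) \<le> (\<Sum>k\<in>{1..N}. 1 / real k)^4"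
proof -
  define W where "W = (SIGMA n:{1..N}. {x. x dvd n} \<times> {u. u dvd n})"
  define F where "F = (\<lambda>(a::nat,b::nat,c::nat,d::nat). 1 / real (a*b*c*d))"
  have finW: "finite W" unfolding W_def by (intro finite_SigmaI finite_cartesian_product) auto
  have "(\<Sum>n\<in>{1..N}. real (divisor_count n)^2 / real n)
      = (\<Sum>n\<in>{1..N}. \<Sum>p\<in>{x. x dvd n} \<times> {u. u dvd n}. 1 / real n)"
    by (intro sum.cong) (auto simp: divisor_count_def card_cartesian_product power2_eq_square)
  also have "\<dots> = (\<Sum>(n,p)\<in>W. 1 / real n)" unfolding W_def
    by (rule sum.Sigma) (auto intro: finite_cartesian_product)
  also have "\<dots> = (\<Sum>w\<in>W. F (gmap w))"
  proof (intro sum.cong refl)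
    fix w assume "w \<in> W"
    then obtain n x u where w: "w = (n,x,u)" "n \<in> {1..N}" "x dvd n" "u dvd n" unfolding W_def by auto
    hence n0: "n > 0" by simp
    have P: "gcd x u * (x div gcd x u) * (u div gcd x u) * ((n div x) div (u div gcd x u)) = n"
      by (rule gmap_props(5)[OF n0 w(3,4)])
    show "(case w of (n, p) \<Rightarrow> 1 / real n) = F (gmap w)"
      by (simp only: w(1) gmap_def F_def prod.case P)
  qed
  also have "\<dots> = (\<Sum>v\<in>gmap ` W. F v)"
  proof (rule sum.reindex[symmetric, unfolded comp_def])
    show "inj_on gmap W"
    proof (rule inj_onI)
      fix w w' assume w: "w \<in> W" and w': "w' \<in> W" and eq: "gmap w = gmap w'"
      obtain n x u where h: "w = (n,x,u)" "n \<in> {1..N}" "x dvd n" "u dvd n" using w unfolding W_def by auto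
      obtain n' x' u' where h': "w' = (n',x',u')" "n' \<in> {1..N}" "x' dvd n'" "u' dvd n'" using w' unfolding W_def by auto
      have p: "n > 0" "n' > 0" using h h' by auto
      note A = gmap_props[OF p(1) h(3,4)] and A' = gmap_props[OF p(2) h'(3,4)]
      have eq': "gcd x u = gcd x' u'" "x div gcd x u = x' div gcd x' u'" "u div gcd x u = u' div gcd x' u'"
        "(n div x) div (u div gcd x u) = (n' div x') div (u' div gcd x' u')"
        using eq unfolding h h' gmap_def by auto
      have "n = n'" using A(5) A'(5) eq' by metis
      moreover have "x = x'" using A(6) A'(6) eq' by metis
      moreover have "u = u'" using A(7) A'(7) eq' by metis
      ultimately show "w = w'" using h h' by simp
    qed
  qed
  also have "\<dots> \<le> (\<Sum>v\<in>{1..N} \<times> {1..N} \<times> {1..N} \<times> {1..N}. F v)"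
  proof (rule sum_mono2)
    show "gmap ` W \<subseteq> {1..N} \<times> {1..N} \<times> {1..N} \<times> {1..N}"
    proof
      fix v assume "v \<in> gmap ` W"
      then obtain n x u where h: "v = gmap (n,x,u)" "n \<in> {1..N}" "x dvd n" "u dvd n" unfolding W_def by auto
      have p: "n > 0" using h by auto
      note A = gmap_props[OF p h(3,4)]
      define al where "al = gcd x u"
      define be where "be = x div gcd x u"
      define ga where "ga = u div gcd x u"
      define de where "de = (n div x) div (u div gcd x u)"
      have v: "v = (al,be,ga,de)" unfolding h(1) gmap_def al_def be_def ga_def de_def by simp
      have pr: "al*be*ga*de = n" "al>0" "be>0" "ga>0" "de>0" using A unfolding al_def be_def ga_def de_def by auto
      have "al dvd n" by (rule dvdI[of _ _ "be*ga*de"]) (simp add: mult_ac pr(1)[symmetric])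
      moreover have "be dvd n" by (rule dvdI[of _ _ "al*ga*de"]) (simp add: mult_ac pr(1)[symmetric])
      moreover have "ga dvd n" by (rule dvdI[of _ _ "al*be*de"]) (simp add: mult_ac pr(1)[symmetric])
      moreover have "de dvd n" by (rule dvdI[of _ _ "al*be*ga"]) (simp add: mult_ac pr(1)[symmetric])
      ultimately have "al \<le> n" "be \<le> n" "ga \<le> n" "de \<le> n" using p by (auto intro: dvd_imp_le)
      thus "v \<in> {1..N} \<times> {1..N} \<times> {1..N} \<times> {1..N}" using v pr h(2) by auto
    qed
  qed (auto simp: F_def)
  also have "\<dots> = (\<Sum>k\<in>{1..N}. 1 / real k)^4"
  proof -
    have "(\<Sum>v\<in>{1..N} \<times> {1..N} \<times> {1..N} \<times> {1..N}. F v) = 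
      (\<Sum>(a,b,c,d)\<in>{1..N} \<times> {1..N} \<times> {1..N} \<times> {1..N}. (1/real a) * (1/real b) * (1/real c) * (1/real d))"
      unfolding F_def by (intro sum.cong) auto
    also have "\<dots> = (\<Sum>k\<in>{1..N}. 1 / real k) * (\<Sum>k\<in>{1..N}. 1 / real k) * (\<Sum>k\<in>{1..N}. 1 / real k) * (\<Sum>k\<in>{1..N}. 1 / real k)"
      by (rule sum4)
    finally show ?thesis by (simp add: power4_eq_xxxx)
  qed
  finally show ?thesis .
qed



definition Tf :: "nat \<Rightarrow> nat \<Rightarrow> nat \<Rightarrow> nat \<Rightarrow> real" where
  "Tf n1 n2 n3 n4 = real (divisor_count n1 * divisor_count n2 * divisor_count n3 * divisor_count n4)
       * (sqrt (real n1) + sqrt (real n2) + sqrt (real n3) + sqrt (real n4))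
       / (real (n1 * n2 * n3 * n4)) powr (3/4)"

lemma Tf_nonneg: "Tf n1 n2 n3 n4 \<ge> 0" unfolding Tf_def by simp

lemma pow_powr: "(X::real) > 0 \<Longrightarrow> (X ^ n) powr r = X powr (real n * r)"
  by (simp add: powr_realpow[symmetric] powr_powr)

lemma sqrt_powr: "(X::real) > 0 \<Longrightarrow> sqrt X = X powr (1/2)"
  by (simp add: powr_half_sqrt)

lemma key_ce:
  fixes C E :: real assumes "C \<ge> 1" "E \<ge> 1"
  shows "(C + E) * (C powr (-5/4) * E powr (-5/4)) \<le> 2 * (C powr (-5/4) + E powr (-5/4))"
proof -
  have gen: "(X + Y) * (X powr (-5/4) * Y powr (-5/4)) \<le> 2 * X powr (-5/4)"
    if "1 \<le> X" "X \<le> Y" for X Y :: real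
  proof -
    have Yp: "Y > 0" using that by simp
    have "(X + Y) * (X powr (-5/4) * Y powr (-5/4)) \<le> (2*Y) * (X powr (-5/4) * Y powr (-5/4))"
      using that by (intro mult_right_mono) auto
    also have "\<dots> = 2 * X powr (-5/4) * (Y * Y powr (-5/4))" by simp
    also have "Y * Y powr (-5/4) = Y powr (-1/4)"
    proof -
      have "Y * Y powr (-5/4) = Y powr 1 * Y powr (-5/4)" using Yp by simp
      also have "\<dots> = Y powr (1 + -5/4)" by (simp only: powr_add)
      finally show ?thesis by simp
    qed
    also have "Y powr (-1/4) \<le> Y powr 0" using that by (intro powr_mono) auto
    hence "2 * X powr (-5/4) * Y powr (-1/4) \<le> 2 * X powr (-5/4) * Y powr 0"
      by (intro mult_left_mono) auto
    also have "\<dots> = 2 * X powr (-5/4)" using Yp by simp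
    finally show ?thesis by simp
  qed
  show ?thesis
  proof (cases "C \<le> E")
    case True
    from gen[OF assms(1) True] show ?thesis by (smt (verit) powr_ge_zero)
  next
    case False
    from gen[OF assms(2)] False have "(E + C) * (E powr (-5/4) * C powr (-5/4)) \<le> 2 * E powr (-5/4)" by simp
    thus ?thesis by (smt (verit) powr_ge_zero mult.commute)
  qed
qed

lemma dc_bound2: "n > 0 \<Longrightarrow> real (divisor_count n)^2 \<le> MD^2 * real n powr (1/4)"
proof -
  assume n: "n > 0"
  have "real (divisor_count n)^2 \<le> (MD * real n powr (1/8))^2"
    using dc_bound[OF n] by (intro power_mono) auto
  also have "\<dots> = MD^2 * (real n powr (1/8) * real n powr (1/8))" by (simp add: power2_eq_square)
  also have "real n powr (1/8) * real n powr (1/8) = real n powr (1/4)" by (simp flip: powr_add)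
  finally show ?thesis .
qed

lemma diag_pt:
  assumes a: "a > 0" and b: "b > 0"
  shows "Tf a b a b \<le> 2 * MD^2 * (real (divisor_count a)^2 / real a * real b powr (-5/4)
            + real a powr (-5/4) * (real (divisor_count b)^2 / real b))"
proof -
  define A where "A = real a"
  define B where "B = real b"
  define da where "da = real (divisor_count a)"
  define db where "db = real (divisor_count b)"
  have Ap: "A > 0" and Bp: "B > 0" using a b by (auto simp: A_def B_def)
  have P: "real (a*b*a*b) powr (3/4) = A powr (3/2) * B powr (3/2)"
  proof -
    have "real (a*b*a*b) = (A*B)^2" by (simp add: A_def B_def power2_eq_square)
    hence "real (a*b*a*b) powr (3/4) = (A*B) powr (3/2)" using Ap Bp by (simp add: pow_powr)
    thus ?thesis by (simp add: powr_mult)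
  qed
  have s1: "sqrt A / A powr (3/2) = 1 / A" using Ap
    by (simp add: sqrt_powr powr_diff[symmetric] powr_minus_divide)
  have s2: "sqrt B / B powr (3/2) = 1 / B" using Bp
    by (simp add: sqrt_powr powr_diff[symmetric] powr_minus_divide)
  have "Tf a b a b = 2 * da^2 * db^2 * (sqrt A + sqrt B) / (A powr (3/2) * B powr (3/2))"
    unfolding Tf_def P by (simp add: A_def B_def da_def db_def power2_eq_square algebra_simps)
  also have "\<dots> = 2 * ((da^2 / A) * (db^2 * B powr (-3/2)) + (da^2 * A powr (-3/2)) * (db^2 / B))"
    using Ap Bp s1 s2 by (simp add: powr_minus_divide field_simps)
  also have "\<dots> \<le> 2 * ((da^2 / A) * (MD^2 * B powr (-5/4)) + (MD^2 * A powr (-5/4)) * (db^2 / B))"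
  proof -
    have "db^2 * B powr (-3/2) \<le> (MD^2 * B powr (1/4)) * B powr (-3/2)"
      unfolding db_def B_def by (intro mult_right_mono dc_bound2 b) auto
    also have "\<dots> = MD^2 * B powr (-5/4)" by (simp add: mult.assoc flip: powr_add)
    finally have 1: "db^2 * B powr (-3/2) \<le> MD^2 * B powr (-5/4)" .
    have "da^2 * A powr (-3/2) \<le> (MD^2 * A powr (1/4)) * A powr (-3/2)"
      unfolding da_def A_def by (intro mult_right_mono dc_bound2 a) auto
    also have "\<dots> = MD^2 * A powr (-5/4)" by (simp add: mult.assoc flip: powr_add)
    finally have 2: "da^2 * A powr (-3/2) \<le> MD^2 * A powr (-5/4)" .
    have X: "da^2 / A \<ge> 0" "db^2 / B \<ge> 0" using Ap Bp by auto
    have "(da^2 / A) * (db^2 * B powr (-3/2)) \<le> (da^2 / A) * (MD^2 * B powr (-5/4))"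
      by (rule mult_left_mono[OF 1 X(1)])
    moreover have "(da^2 * A powr (-3/2)) * (db^2 / B) \<le> (MD^2 * A powr (-5/4)) * (db^2 / B)"
      by (rule mult_right_mono[OF 2 X(2)])
    ultimately show ?thesis by simp
  qed
  also have "\<dots> = 2 * MD^2 * (da^2 / A * B powr (-5/4) + A powr (-5/4) * (db^2 / B))"
    by (simp add: algebra_simps)
  finally show ?thesis by (simp add: A_def B_def da_def db_def)
qed



definition G :: "nat \<Rightarrow> nat \<Rightarrow> nat \<Rightarrow> nat \<Rightarrow> real" where
  "G q a b c = real q powr (-2) * real a powr (-5/4) * real b powr (-5/4) * real c powr (-5/4)"

lemma G_nonneg: "G q a b c \<ge> 0" unfolding G_def by simp

lemma nd_pt:
  assumes q: "q > 0" and a: "a > 0" and b: "b > 0" and c: "c > 0" and cab: "c < a + b"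
  shows "Tf (q*a^2) (q*b^2) (q*c^2) (q*(a+b-c)^2) \<le> 4 * MD^4 * (G q a b c + G q a b (a+b-c))"
proof -
  define e where "e = a + b - c"
  have e: "e > 0" using cab by (simp add: e_def)
  define Q where "Q = real q"
  define A where "A = real a"
  define B where "B = real b"
  define C where "C = real c"
  define E where "E = real e"
  have pos: "Q > 0" "A > 0" "B > 0" "C > 0" "E > 0" using q a b c e by (auto simp: Q_def A_def B_def C_def E_def)
  have ge1: "C \<ge> 1" "E \<ge> 1" using c e by (auto simp: C_def E_def)
  have CE: "C + E = A + B" using cab by (simp add: C_def E_def A_def B_def e_def)
  define n1 where "n1 = q*a^2"
  define n2 where "n2 = q*b^2"
  define n3 where "n3 = q*c^2"
  define n4 where "n4 = q*e^2"
  have np: "n1 > 0" "n2 > 0" "n3 > 0" "n4 > 0" using q a b c e by (auto simp: n1_def n2_def n3_def n4_def)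
  define P where "P = real (n1*n2*n3*n4)"
  have Pp: "P > 0" using np by (simp add: P_def)
  have PE: "P = Q^4 * (A*B*C*E)^2"
    by (simp add: P_def n1_def n2_def n3_def n4_def Q_def A_def B_def C_def E_def power2_eq_square
        power4_eq_xxxx mult_ac)
  define D where "D = real (divisor_count n1 * divisor_count n2 * divisor_count n3 * divisor_count n4)"
  have DB: "D \<le> MD^4 * P powr (1/8)"
  proof -
    have "D = real (divisor_count n1) * real (divisor_count n2) * real (divisor_count n3) * real (divisor_count n4)"
      by (simp add: D_def)
    also have "\<dots> \<le> (MD * real n1 powr (1/8)) * (MD * real n2 powr (1/8)) * (MD * real n3 powr (1/8)) * (MD * real n4 powr (1/8))"
      using dc_bound[OF np(1)] dc_bound[OF np(2)] dc_bound[OF np(3)] dc_bound[OF np(4)]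
      by (intro mult_mono) auto
    also have "\<dots> = MD^4 * P powr (1/8)"
      by (simp add: P_def powr_mult power4_eq_xxxx mult_ac)
    finally show ?thesis .
  qed
  define SS where "SS = sqrt (real n1) + sqrt (real n2) + sqrt (real n3) + sqrt (real n4)"
  have SSE: "SS = 2 * sqrt Q * (A + B)"
  proof -
    have "SS = sqrt Q * (A + B + C + E)"
      by (simp add: SS_def n1_def n2_def n3_def n4_def Q_def A_def B_def C_def E_def real_sqrt_mult algebra_simps)
    thus ?thesis using CE by simp
  qed
  have SSp: "SS \<ge> 0" using SSE pos by simp
  have "Tf n1 n2 n3 n4 = D * SS / P powr (3/4)" unfolding Tf_def D_def SS_def P_def ..
  also have "\<dots> \<le> MD^4 * P powr (1/8) * SS / P powr (3/4)"
    by (intro divide_right_mono mult_right_mono DB SSp) simp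
  also have "\<dots> = MD^4 * SS * (P powr (1/8) / P powr (3/4))" by simp
  also have "P powr (1/8) / P powr (3/4) = P powr (-5/8)"
    by (simp flip: powr_diff)
  also have "P powr (-5/8) = Q powr (-5/2) * (A powr (-5/4) * B powr (-5/4)) * (C powr (-5/4) * E powr (-5/4))"
  proof -
    have "P powr (-5/8) = (Q^4) powr (-5/8) * ((A*B*C*E)^2) powr (-5/8)" unfolding PE by (simp add: powr_mult)
    also have "\<dots> = Q powr (-5/2) * (A*B*C*E) powr (-5/4)" using pos by (simp add: pow_powr)
    also have "\<dots> = Q powr (-5/2) * (A powr (-5/4) * B powr (-5/4)) * (C powr (-5/4) * E powr (-5/4))"
      by (simp add: powr_mult mult_ac)
    finally show ?thesis .
  qed
  also have "MD^4 * SS * (Q powr (-5/2) * (A powr (-5/4) * B powr (-5/4)) * (C powr (-5/4) * E powr (-5/4)))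
     = 2 * MD^4 * (sqrt Q * Q powr (-5/2)) * (A powr (-5/4) * B powr (-5/4)) * ((C + E) * (C powr (-5/4) * E powr (-5/4)))"
    unfolding SSE CE by (simp add: mult_ac)
  also have "sqrt Q * Q powr (-5/2) = Q powr (-2)"
  proof -
    have "sqrt Q * Q powr (-5/2) = Q powr (1/2) * Q powr (-5/2)" using pos by (simp add: sqrt_powr)
    also have "\<dots> = Q powr (1/2 + -5/2)" by (simp only: powr_add)
    finally show ?thesis by simp
  qed
  also have "2 * MD^4 * Q powr (-2) * (A powr (-5/4) * B powr (-5/4)) * ((C + E) * (C powr (-5/4) * E powr (-5/4)))
      \<le> 2 * MD^4 * Q powr (-2) * (A powr (-5/4) * B powr (-5/4)) * (2 * (C powr (-5/4) + E powr (-5/4)))"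
    by (intro mult_left_mono key_ce ge1) auto
  also have "\<dots> = 4 * MD^4 * (G q a b c + G q a b e)"
    by (simp add: G_def Q_def A_def B_def C_def E_def algebra_simps)
  finally show ?thesis by (simp add: n1_def n2_def n3_def n4_def e_def)
qed



lemma sum_Un_le_nonneg:
  fixes f :: "'a \<Rightarrow> real"
  assumes "finite A" "finite B" "\<And>x. x \<in> A \<union> B \<Longrightarrow> f x \<ge> 0"
  shows "sum f (A \<union> B) \<le> sum f A + sum f B"
proof -
  have "sum f (A \<union> B) = sum f A + sum f B - sum f (A \<inter> B)" using assms(1,2)
    by (simp add: sum_Un)
  moreover have "sum f (A \<inter> B) \<ge> 0" using assms(3) by (intro sum_nonneg) auto
  ultimately show ?thesis by simp
qed

lemma sum_prod2:
  fixes f g :: "nat \<Rightarrow> real"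
  shows "(\<Sum>(a,b)\<in>A \<times> B. f a * g b) = sum f A * sum g B"
  by (simp add: sum.cartesian_product[symmetric] sum_product)

lemma ln_ge_1: "(z::real) \<ge> 10 \<Longrightarrow> ln z \<ge> 1"
proof -
  assume z: "z \<ge> 10"
  have "ln (8::real) = ln (2^3)" by simp
  also have "\<dots> = 3 * ln 2" by (simp only: ln_realpow)
  finally have "ln (8::real) \<ge> 2" using ln2_ge_two_thirds by simp
  moreover have "ln (8::real) \<le> ln z" using z by simp
  ultimately show ?thesis by simp
qed



lemma main_bound:
  fixes P54 P2 :: real
  assumes P54: "\<And>N. (\<Sum>k\<in>{1..N}. real k powr (-5/4)) \<le> P54"
      and P2: "\<And>N. (\<Sum>k\<in>{1..N}. real k powr (-2)) \<le> P2"
      and z: "z \<ge> 10"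
  shows "c2 z \<le> (128 * MD^2 * P54) * ln z ^ 4 + 8 * MD^4 * P2 * P54^3"
proof -
  define Z where "Z = nat \<lfloor>z\<rfloor>"
  have Z10: "Z \<ge> 10" using z unfolding Z_def by linarith
  have Zz: "real Z \<le> z" using z unfolding Z_def by linarith
  have P54p: "P54 \<ge> 1" using P54[of 1] by simp
  have P2p: "P2 \<ge> 1" using P2[of 1] by simp
  define S where "S = {(n1, n2, n3, n4).
              n1 \<in> {1..Z} \<and> n2 \<in> {1..Z} \<and> n3 \<in> {1..Z} \<and> n4 \<in> {1..Z} \<and>
              sqrt (real n1) + sqrt (real n2) = sqrt (real n3) + sqrt (real n4)}"
  define Tt where "Tt = (\<lambda>(n1::nat, n2::nat, n3::nat, n4::nat). Tf n1 n2 n3 n4)"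
  have Ttn: "Tt x \<ge> 0" for x unfolding Tt_def by (auto simp: Tf_nonneg split: prod.splits)
  have c2e: "c2 z = sum Tt S" unfolding c2_def S_def Tt_def Tf_def Z_def ..
  define ZZ where "ZZ = {1..Z} \<times> {1..Z}"
  define A1 where "A1 = (\<lambda>(a,b). (a,b,a,b)) ` ZZ"
  define A2 where "A2 = (\<lambda>(a,b). (a,b,b,a)) ` ZZ"
  define BS where "BS = Set.filter (\<lambda>(q,a,b,c). c < a + b) ({1..Z} \<times> {1..Z} \<times> {1..Z} \<times> {1..Z})"
  define hm where "hm = (\<lambda>(q::nat,a::nat,b::nat,c::nat). (q*a^2, q*b^2, q*c^2, q*(a+b-c)^2))"
  define A3 where "A3 = hm ` BS"
  have finZZ: "finite ZZ" unfolding ZZ_def by simp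
  have finBS: "finite BS" unfolding BS_def by simp
  have fin: "finite A1" "finite A2" "finite A3" unfolding A1_def A2_def A3_def using finZZ finBS by auto
  have sub: "S \<subseteq> A1 \<union> A2 \<union> A3"
  proof
    fix x assume "x \<in> S"
    then obtain n1 n2 n3 n4 where x: "x = (n1,n2,n3,n4)" "n1 \<in> {1..Z}" "n2 \<in> {1..Z}" "n3 \<in> {1..Z}" "n4 \<in> {1..Z}"
      "sqrt (real n1) + sqrt (real n2) = sqrt (real n3) + sqrt (real n4)" unfolding S_def by auto
    have pos: "n1 > 0" "n2 > 0" "n3 > 0" "n4 > 0" using x by auto
    from char[OF pos x(6)] show "x \<in> A1 \<union> A2 \<union> A3"
    proof (elim disjE exE conjE)
      assume "n1 = n3" "n2 = n4"
      hence "x \<in> A1" unfolding A1_def ZZ_def using x by (auto intro!: image_eqI[of _ _ "(n1,n2)"])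
      thus ?thesis by simp
    next
      assume "n1 = n4" "n2 = n3"
      hence "x \<in> A2" unfolding A2_def ZZ_def using x by (auto intro!: image_eqI[of _ _ "(n1,n2)"])
      thus ?thesis by simp
    next
      fix q a b c
      assume h: "0 < q" "q \<le> n1" "0 < a" "a \<le> n1" "0 < b" "b \<le> n2" "0 < c" "c \<le> n3" "c < a + b"
        "n1 = q * a\<^sup>2" "n2 = q * b\<^sup>2" "n3 = q * c\<^sup>2" "n4 = q * (a + b - c)\<^sup>2"
      have "q \<le> Z" using h(2) x(2) by simp
      moreover have "a \<le> Z" using h(4) x(2) by simp
      moreover have "b \<le> Z" using h(6) x(3) by simp
      moreover have "c \<le> Z" using h(8) x(4) by simp
      ultimately have "(q,a,b,c) \<in> BS" unfolding BS_def using h by auto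
      moreover have "x = hm (q,a,b,c)" unfolding hm_def using h x by simp
      ultimately have "x \<in> A3" unfolding A3_def by blast
      thus ?thesis by simp
    qed
  qed
  have "c2 z \<le> sum Tt (A1 \<union> A2 \<union> A3)"
    unfolding c2e by (intro sum_mono2 sub Ttn) (use fin in auto)
  also have "\<dots> \<le> sum Tt (A1 \<union> A2) + sum Tt A3"
    by (rule sum_Un_le_nonneg) (use fin Ttn in auto)
  also have "sum Tt (A1 \<union> A2) \<le> sum Tt A1 + sum Tt A2"
    by (rule sum_Un_le_nonneg) (use fin Ttn in auto)
  finally have split: "c2 z \<le> sum Tt A1 + sum Tt A2 + sum Tt A3" by simp
  define f1 where "f1 = (\<lambda>a. real (divisor_count a)^2 / real a)"
  define g where "g = (\<lambda>a::nat. real a powr (-5/4))"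
  have H: "sum f1 {1..Z} \<le> 16 * ln z ^ 4"
  proof -
    have "sum f1 {1..Z} \<le> (\<Sum>k\<in>{1..Z}. 1 / real k)^4" unfolding f1_def by (rule d2_sum)
    also have "\<dots> \<le> (1 + ln (real Z))^4"
      using Z10 by (intro power_mono harm_bound sum_nonneg) auto
    also have "\<dots> \<le> (2 * ln z)^4"
    proof (intro power_mono)
      have "ln (real Z) \<le> ln z" using Zz Z10 by simp
      thus "1 + ln (real Z) \<le> 2 * ln z" using ln_ge_1[OF z] by simp
      show "0 \<le> 1 + ln (real Z)" using Z10 by simp
    qed
    finally show ?thesis by simp
  qed
  have f1n: "sum f1 {1..Z} \<ge> 0" unfolding f1_def by (intro sum_nonneg) auto
  have gB: "sum g {1..N} \<le> P54" for N unfolding g_def using P54 by simp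
  have gn: "sum g {1..N} \<ge> 0" for N unfolding g_def by (intro sum_nonneg) auto
  have diag: "(\<Sum>(a,b)\<in>ZZ. Tf a b a b) \<le> 64 * MD^2 * P54 * ln z ^ 4"
  proof -
    have "(\<Sum>(a,b)\<in>ZZ. Tf a b a b) \<le> (\<Sum>(a,b)\<in>ZZ. 2 * MD^2 * (f1 a * g b + g a * f1 b))"
    proof (intro sum_mono)
      fix v assume "v \<in> ZZ"
      then obtain a b where v: "v = (a,b)" "a \<ge> 1" "b \<ge> 1" unfolding ZZ_def by auto
      have "Tf a b a b \<le> 2 * MD^2 * (f1 a * g b + g a * f1 b)"
        unfolding f1_def g_def using diag_pt[of a b] v by simp
      thus "(case v of (a, b) \<Rightarrow> Tf a b a b) \<le> (case v of (a, b) \<Rightarrow> 2 * MD^2 * (f1 a * g b + g a * f1 b))"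
        using v by simp
    qed
    also have "\<dots> = 2 * MD^2 * ((\<Sum>(a,b)\<in>ZZ. f1 a * g b) + (\<Sum>(a,b)\<in>ZZ. g a * f1 b))"
      by (simp only: sum.distrib[symmetric] sum_distrib_left case_prod_unfold)
    also have "\<dots> = 2 * MD^2 * (2 * (sum f1 {1..Z} * sum g {1..Z}))"
      unfolding ZZ_def sum_prod2 by simp
    also have "\<dots> \<le> 2 * MD^2 * (2 * ((16 * ln z ^ 4) * P54))"
      using H gB[of Z] f1n gn[of Z] by (intro mult_left_mono mult_mono) auto
    also have "\<dots> = 64 * MD^2 * P54 * ln z ^ 4" by (simp add: mult_ac)
    finally show ?thesis .
  qed
  have d1: "sum Tt A1 \<le> 64 * MD^2 * P54 * ln z ^ 4"
  proof -
    have "sum Tt A1 \<le> sum (Tt \<circ> (\<lambda>(a,b). (a,b,a,b))) ZZ"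
      unfolding A1_def by (rule sum_image_le) (use finZZ Ttn in auto)
    also have "\<dots> = (\<Sum>(a,b)\<in>ZZ. Tf a b a b)" unfolding Tt_def by (simp add: case_prod_unfold)
    finally show ?thesis using diag by simp
  qed
  have d2: "sum Tt A2 \<le> 64 * MD^2 * P54 * ln z ^ 4"
  proof -
    have "sum Tt A2 \<le> sum (Tt \<circ> (\<lambda>(a,b). (a,b,b,a))) ZZ"
      unfolding A2_def by (rule sum_image_le) (use finZZ Ttn in auto)
    also have "\<dots> = (\<Sum>(a,b)\<in>ZZ. Tf a b a b)" unfolding Tt_def
      by (intro sum.cong) (auto simp: Tf_def mult_ac add_ac)
    finally show ?thesis using diag by simp
  qed
  define gq where "gq = (\<lambda>q::nat. real q powr (-2))"
  have gqB: "sum gq {1..N} \<le> P2" for N unfolding gq_def using P2 by simp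
  have gqn: "sum gq {1..N} \<ge> 0" for N unfolding gq_def by (intro sum_nonneg) auto
  have G4: "G q a b c = gq q * g a * g b * g c" for q a b c unfolding G_def gq_def g_def by simp
  have box: "(\<Sum>v\<in>{1..Z} \<times> {1..Z} \<times> {1..Z} \<times> {1..M}. (\<lambda>(q,a,b,c). G q a b c) v) \<le> P2 * P54^3" for M
  proof -
    have "(\<Sum>v\<in>{1..Z} \<times> {1..Z} \<times> {1..Z} \<times> {1..M}. (\<lambda>(q,a,b,c). G q a b c) v)
        = (\<Sum>(q,a,b,c)\<in>{1..Z} \<times> {1..Z} \<times> {1..Z} \<times> {1..M}. gq q * g a * g b * g c)"
      by (intro sum.cong) (auto simp: G4)
    also have "\<dots> = sum gq {1..Z} * sum g {1..Z} * sum g {1..Z} * sum g {1..M}" by (rule sum4)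
    also have "\<dots> \<le> P2 * P54 * P54 * P54"
      using gqB gqn gB gn P2p P54p by (intro mult_mono) auto
    finally show ?thesis by (simp add: power3_eq_cube mult_ac)
  qed
  have nd: "sum Tt A3 \<le> 8 * MD^4 * P2 * P54^3"
  proof -
    have "sum Tt A3 \<le> sum (Tt \<circ> hm) BS"
      unfolding A3_def by (rule sum_image_le) (use finBS Ttn in auto)
    also have "\<dots> \<le> (\<Sum>(q,a,b,c)\<in>BS. 4 * MD^4 * (G q a b c + G q a b (a+b-c)))"
    proof (intro sum_mono)
      fix v assume "v \<in> BS"
      then obtain q a b c where v: "v = (q,a,b,c)" "q \<ge> 1" "a \<ge> 1" "b \<ge> 1" "c \<ge> 1" "c < a + b"
        unfolding BS_def by auto
      show "(Tt \<circ> hm) v \<le> (case v of (q,a,b,c) \<Rightarrow> 4 * MD^4 * (G q a b c + G q a b (a+b-c)))"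
        unfolding v(1) using nd_pt[of q a b c] v by (simp add: Tt_def hm_def)
    qed
    also have "\<dots> = 4 * MD^4 * ((\<Sum>(q,a,b,c)\<in>BS. G q a b c) + (\<Sum>(q,a,b,c)\<in>BS. G q a b (a+b-c)))"
      by (simp only: sum.distrib[symmetric] sum_distrib_left case_prod_unfold)
    also have "(\<Sum>(q,a,b,c)\<in>BS. G q a b c) \<le> P2 * P54^3"
    proof -
      have "(\<Sum>(q,a,b,c)\<in>BS. G q a b c) \<le> (\<Sum>v\<in>{1..Z} \<times> {1..Z} \<times> {1..Z} \<times> {1..Z}. (\<lambda>(q,a,b,c). G q a b c) v)"
        by (rule sum_mono2) (auto simp: BS_def G_nonneg)
      thus ?thesis using box[of Z] by simp
    qed
    also have "(\<Sum>(q,a,b,c)\<in>BS. G q a b (a+b-c)) \<le> P2 * P54^3"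
    proof -
      define r where "r = (\<lambda>(q::nat,a::nat,b::nat,c::nat). (q,a,b,a+b-c))"
      have inj: "inj_on r BS"
        by (rule inj_onI) (auto simp: r_def BS_def)
      have "(\<Sum>(q,a,b,c)\<in>BS. G q a b (a+b-c)) = (\<Sum>v\<in>BS. (\<lambda>(q,a,b,c). G q a b c) (r v))"
        by (intro sum.cong) (auto simp: r_def)
      also have "\<dots> = (\<Sum>v\<in>r ` BS. (\<lambda>(q,a,b,c). G q a b c) v)"
        by (rule sum.reindex[OF inj, symmetric, unfolded comp_def])
      also have "\<dots> \<le> (\<Sum>v\<in>{1..Z} \<times> {1..Z} \<times> {1..Z} \<times> {1..2*Z}. (\<lambda>(q,a,b,c). G q a b c) v)"
        by (rule sum_mono2) (auto simp: BS_def r_def G_nonneg)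
      finally show ?thesis using box[of "2*Z"] by simp
    qed
    finally show ?thesis using MD_pos by (simp add: mult_left_mono)
  qed
  show ?thesis using split d1 d2 nd by simp
qed

theorem lemma4p3:
  shows "\<exists>C>0. \<forall>z::real. z \<ge> 10 \<longrightarrow> \<bar>c2 z\<bar> \<le> C * (ln z) ^ 4"
proof -
  obtain P54 where P54': "\<forall>N. (\<Sum>k\<in>{1..N}. real k powr (- (5/4))) \<le> P54"
    using psum_bound[of "5/4"] by auto
  have P54: "(\<Sum>k\<in>{1..N}. real k powr (-5/4)) \<le> P54" for N using P54' by simp
  obtain P2 where P2': "\<forall>N. (\<Sum>k\<in>{1..N}. real k powr (- 2)) \<le> P2"
    using psum_bound[of 2] by auto
  have P2: "(\<Sum>k\<in>{1..N}. real k powr (-2)) \<le> P2" for N using P2' by simp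
  have P54p: "P54 \<ge> 1" using P54[of 1] by simp
  have P2p: "P2 \<ge> 1" using P2[of 1] by simp
  define C where "C = 128 * MD^2 * P54 + 8 * MD^4 * P2 * P54^3"
  have Cp: "C > 0" unfolding C_def using MD_pos P54p P2p by (intro add_pos_pos mult_pos_pos) auto
  show ?thesis
  proof (intro exI[of _ C] conjI allI impI Cp)
    fix z :: real assume z: "z \<ge> 10"
    have l1: "ln z ^ 4 \<ge> 1" using ln_ge_1[OF z] by (simp add: one_le_power)
    have c2n: "c2 z \<ge> 0" unfolding c2_def by (intro sum_nonneg) (auto split: prod.splits)
    have "c2 z \<le> (128 * MD^2 * P54) * ln z ^ 4 + 8 * MD^4 * P2 * P54^3"
      by (rule main_bound[OF P54 P2 z])
    also have "8 * MD^4 * P2 * P54^3 \<le> 8 * MD^4 * P2 * P54^3 * ln z ^ 4"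
      using mult_left_mono[OF l1, of "8 * MD^4 * P2 * P54^3"] MD_pos P2p P54p by simp
    finally show "\<bar>c2 z\<bar> \<le> C * ln z ^ 4" using c2n unfolding C_def by (simp add: algebra_simps)
  qed
qed

end
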